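(* For even $n$ and an alphabet $\Sigma$ with $|\Sigma|\ge n$, $\mathsf{maxPI}(\mathrm{Col})=\Theta(\sqrt{n})$.
   Context: The collision problem $\mathrm{Col}$ is the partial function on $S\subseteq\Sigma^n$ where $S$ consists of the positive inputs, $x=x_1\cdots x_n$ with all $x_i$ distinct ($\mathrm{Col}(x)=1$), and the negative inputs, $x$ such that for each $i$ there is exactly one $j\neq i$ with $x_i=x_j$ ($\mathrm{Col}(x)=0$). For $f:S\to\{0,1\}$, $S\subseteq\Sigma^n$, with $p=\{p_x:x\in S\}$ ranging over families of probability distributions on $[n]$, $$\mathsf{maxPI}(f)=\min_{p}\ \max_{x,y\in S:\ f(x)\neq f(y)} \frac{1}{\max_{i:\,x_i\neq y_i}\sqrt{p_x(i)p_y(i)}}.$$ *)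

theory Defs
  imports "HOL-Analysis.Analysis" "HOL-Library.Extended_Real"
begin

text \<open>Inputs in Sigma^n are lists of length n; positions are 0..<n (standing for [n]).\<close>

definition Col_pos :: "nat \<Rightarrow> 'a set \<Rightarrow> 'a list set" where
  "Col_pos n \<Sigma> = {x. length x = n \<and> set x \<subseteq> \<Sigma> \<and> distinct x}"

definition Col_neg :: "nat \<Rightarrow> 'a set \<Rightarrow> 'a list set" where
  "Col_neg n \<Sigma> = {x. length x = n \<and> set x \<subseteq> \<Sigma> \<and>
      (\<forall>i<n. \<exists>!j. j < n \<and> j \<noteq> i \<and> x ! i = x ! j)}"

definition Col_dom :: "nat \<Rightarrow> 'a set \<Rightarrow> 'a list set" where
  "Col_dom n \<Sigma> = Col_pos n \<Sigma> \<union> Col_neg n \<Sigma>"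

definition Col :: "'a list \<Rightarrow> bool" where
  "Col x = distinct x"

definition prob_families :: "nat \<Rightarrow> 'a list set \<Rightarrow> ('a list \<Rightarrow> nat \<Rightarrow> real) set" where
  "prob_families n S = {p. \<forall>x\<in>S. (\<forall>i<n. 0 \<le> p x i) \<and> (\<Sum>i<n. p x i) = 1}"

definition pi_term :: "nat \<Rightarrow> ('a list \<Rightarrow> nat \<Rightarrow> real) \<Rightarrow> 'a list \<Rightarrow> 'a list \<Rightarrow> ereal" where
  "pi_term n p x y =
     (let m = Max {sqrt (p x i * p y i) | i. i < n \<and> x ! i \<noteq> y ! i}
      in if m = 0 then \<infinity> else ereal (1 / m))"

definition maxPI :: "nat \<Rightarrow> 'a list set \<Rightarrow> ('a list \<Rightarrow> bool) \<Rightarrow> ereal" where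
  "maxPI n S f =
     (INF p \<in> prob_families n S.
        SUP xy \<in> {(x, y). x \<in> S \<and> y \<in> S \<and> f x \<noteq> f y}. pi_term n p (fst xy) (snd xy))"

end

theory Submission
  imports Defs
begin

lemma neg_not_distinct:
  assumes "y \<in> Col_neg n S" "n > 0"
  shows "\<not> distinct y"
proof -
  from assms obtain j where "j < n" "j \<noteq> 0" "y ! 0 = y ! j"
    unfolding Col_neg_def by blast
  moreover have "length y = n" using assms unfolding Col_neg_def by blast
  ultimately show ?thesis by (metis assms(2) nth_eq_iff_index_eq)
qed

lemma pi_term_sym: "pi_term n p x y = pi_term n p y x"
proof -
  have "{sqrt (p x i * p y i) | i. i < n \<and> x ! i \<noteq> y ! i}
      = {sqrt (p y i * p x i) | i. i < n \<and> y ! i \<noteq> x ! i}"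
    by (metis mult.commute)
  then show ?thesis unfolding pi_term_def by metis
qed

lemma fin_set: "finite {f i | i. i < (n::nat) \<and> P i}"
  by simp

lemma pi_term_ge:
  assumes "\<And>i. i < n \<Longrightarrow> x ! i \<noteq> y ! i \<Longrightarrow> sqrt (p x i * p y i) \<le> s"
    and "s > 0" and "\<exists>i. i < n \<and> x ! i \<noteq> y ! i"
    and nn: "\<And>i. i < n \<Longrightarrow> 0 \<le> p x i * p y i"
  shows "ereal (1 / s) \<le> pi_term n p x y"
proof -
  let ?A = "{sqrt (p x i * p y i) | i. i < n \<and> x ! i \<noteq> y ! i}"
  have ne: "?A \<noteq> {}" using assms(3) by blast
  have fin: "finite ?A" by simp
  have le: "Max ?A \<le> s" using assms(1) ne fin by (subst Max_le_iff) auto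
  show ?thesis
  proof (cases "Max ?A = 0")
    case True then show ?thesis unfolding pi_term_def Let_def by simp
  next
    case False
    obtain i where i: "i < n" "x ! i \<noteq> y ! i" using assms(3) by blast
    have "sqrt (p x i * p y i) \<in> ?A" using i by blast
    then have "sqrt (p x i * p y i) \<le> Max ?A" using fin by (simp add: Max_ge)
    moreover have "sqrt (p x i * p y i) \<ge> 0 \<or> True" by simp
    have ge0: "Max ?A \<ge> 0"
    proof -
      obtain a where "a \<in> ?A" using ne by blast
      then have "a \<ge> 0" using nn by auto
      with \<open>a \<in> ?A\<close> fin show ?thesis by (meson Max_ge order_trans)
    qed
    then have "Max ?A > 0" using False by linarith
    then have "1 / s \<le> 1 / Max ?A" using le by (simp add: frac_le)
    then show ?thesis using False unfolding pi_term_def Let_def by simp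
  qed
qed

lemma pi_term_le:
  assumes "i < n" "x ! i \<noteq> y ! i" "s > 0" "s \<le> sqrt (p x i * p y i)"
  shows "pi_term n p x y \<le> ereal (1 / s)"
proof -
  let ?A = "{sqrt (p x i * p y i) | i. i < n \<and> x ! i \<noteq> y ! i}"
  have fin: "finite ?A" by simp
  have "sqrt (p x i * p y i) \<in> ?A" using assms by blast
  then have "sqrt (p x i * p y i) \<le> Max ?A" using fin by (simp add: Max_ge)
  then have m: "s \<le> Max ?A" using assms by linarith
  then have "Max ?A \<noteq> 0" using assms by linarith
  moreover have "1 / Max ?A \<le> 1 / s" using m assms by (simp add: frac_le)
  ultimately show ?thesis unfolding pi_term_def Let_def by simp
qed

definition pt :: "nat \<Rightarrow> nat list \<Rightarrow> nat" where
  "pt n x = (SOME j. j < n \<and> j \<noteq> 0 \<and> x ! 0 = x ! j)"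

definition p0 :: "nat \<Rightarrow> nat list \<Rightarrow> nat \<Rightarrow> real" where
  "p0 n x i = (if distinct x then 1 / real n else (if i = 0 \<or> i = pt n x then 1/2 else 0))"

lemma pt_prop:
  assumes "y \<in> Col_neg n S" "n > 0"
  shows "pt n y < n \<and> pt n y \<noteq> 0 \<and> y ! 0 = y ! pt n y"
proof -
  from assms obtain j where "j < n" "j \<noteq> 0" "y ! 0 = y ! j"
    unfolding Col_neg_def by blast
  then show ?thesis unfolding pt_def by (rule someI[where P="\<lambda>j. j < n \<and> j \<noteq> 0 \<and> y ! 0 = y ! j", OF conjI[OF _ conjI]])
qed

lemma p0_prob:
  assumes "n > 0"
  shows "p0 n \<in> prob_families n (Col_dom n S)"
  unfolding prob_families_def
proof (intro CollectI ballI conjI allI impI)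
  fix x i assume "x \<in> Col_dom n S" "i < n"
  show "0 \<le> p0 n x i" unfolding p0_def by simp
next
  fix x assume x: "x \<in> Col_dom n S"
  show "(\<Sum>i<n. p0 n x i) = 1"
  proof (cases "distinct x")
    case True then show ?thesis unfolding p0_def using assms by simp
  next
    case False
    then have "x \<in> Col_neg n S" using x unfolding Col_dom_def Col_pos_def by blast
    then have j: "pt n x < n" "pt n x \<noteq> 0" using pt_prop assms by blast+
    have "(\<Sum>i<n. p0 n x i) = (\<Sum>i\<in>{0, pt n x}. p0 n x i)"
      by (rule sum.mono_neutral_right) (use j assms in \<open>auto simp: p0_def False\<close>)
    also have "\<dots> = 1" using j False by (simp add: p0_def)
    finally show ?thesis .
  qed
qed

lemma upper_pair:
  assumes "a \<in> Col_pos n S" "b \<in> Col_neg n S" "n > 0"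
  shows "pi_term n (p0 n) a b \<le> ereal (sqrt 2 * sqrt (real n))"
proof -
  have da: "distinct a" "length a = n" using assms unfolding Col_pos_def by auto
  have db: "\<not> distinct b" using neg_not_distinct assms by blast
  have j: "pt n b < n" "pt n b \<noteq> 0" "b ! 0 = b ! pt n b" using pt_prop assms by blast+
  have "a ! 0 \<noteq> a ! pt n b" using da j assms by (simp add: nth_eq_iff_index_eq)
  then obtain k where k: "k < n" "a ! k \<noteq> b ! k" "k = 0 \<or> k = pt n b"
    using j assms by metis
  let ?s = "sqrt (1 / real n * (1/2))"
  have s0: "?s > 0" using assms by simp
  have "?s \<le> sqrt (p0 n a k * p0 n b k)" using k da db by (auto simp: p0_def)
  then have "pi_term n (p0 n) a b \<le> ereal (1 / ?s)" using pi_term_le k s0 by blast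
  also have "1 / ?s = sqrt 2 * sqrt (real n)"
    using assms by (simp add: real_sqrt_divide real_sqrt_mult field_simps)
  finally show ?thesis .
qed

lemma lower_p:
  assumes n2: "n \<ge> 2" and ev: "even n" and fS: "finite (S::nat set)" and cS: "card S \<ge> n"
    and p: "p \<in> prob_families n (Col_dom n S)"
  shows "ereal (sqrt (real n) / sqrt 2) \<le>
    (SUP xy \<in> {(x, y). x \<in> Col_dom n S \<and> y \<in> Col_dom n S \<and> Col x \<noteq> Col y}.
        pi_term n p (fst xy) (snd xy))"
proof -
  define x where "x = take n (sorted_list_of_set S)"
  have lx: "length x = n" using cS fS unfolding x_def by simp
  have dx: "distinct x" unfolding x_def by simp
  have sx: "set x \<subseteq> S" unfolding x_def using fS by (metis set_take_subset set_sorted_list_of_set)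
  have xpos: "x \<in> Col_pos n S" unfolding Col_pos_def using lx dx sx by simp
  then have xS: "x \<in> Col_dom n S" unfolding Col_dom_def by simp
  have pxnn: "\<And>i. i < n \<Longrightarrow> 0 \<le> p x i" and pxs: "(\<Sum>i<n. p x i) = 1"
    using p xS unfolding prob_families_def by auto
  define H where "H = {i. i < n \<and> p x i > 2 / real n}"
  define L where "L = {i. i < n \<and> p x i \<le> 2 / real n}"
  have Hsub: "H \<subseteq> {..<n}" unfolding H_def by auto
  have finH: "finite H" using Hsub finite_subset by blast
  have "real (card H) * (2 / real n) = (\<Sum>i\<in>H. 2 / real n)" by simp
  also have "\<dots> \<le> (\<Sum>i\<in>H. p x i)" by (rule sum_mono) (auto simp: H_def)
  also have "\<dots> \<le> (\<Sum>i<n. p x i)" by (rule sum_mono2) (use Hsub pxnn in auto)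
  finally have "real (card H) * (2 / real n) \<le> 1" using pxs by simp
  then have "real (card H) * 2 \<le> real n" using n2 by (simp add: field_simps)
  then have cH: "card H * 2 \<le> n" by linarith
  have LH: "L = {..<n} - H" unfolding L_def H_def by auto
  have cL: "card L = n - card H" unfolding LH using Hsub finH by (simp add: card_Diff_subset)
  then have "n div 2 \<le> card L" using cH by linarith
  then obtain L' where L': "L' \<subseteq> L" "card L' = n div 2" "finite L'"
    by (meson obtain_subset_with_card_n)
  define H' where "H' = {..<n} - L'"
  have L'n: "L' \<subseteq> {..<n}" using L' unfolding L_def by auto
  have "card H' = n - n div 2" unfolding H'_def using L' L'n
    by (simp add: card_Diff_subset)
  then have cH': "card H' = n div 2" using ev by presburger
  have fH': "finite H'" unfolding H'_def by simp
  have "card L' = card H'" using L'(2) cH' by simp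
  then have "\<exists>g. bij_betw g L' H'" using finite_same_card_bij[OF L'(3) fH'] by simp
  then obtain g where g: "bij_betw g L' H'" ..
  have gH: "\<And>i. i \<in> L' \<Longrightarrow> g i \<in> H'" using g unfolding bij_betw_def by blast
  have ginj: "\<And>i j. i \<in> L' \<Longrightarrow> j \<in> L' \<Longrightarrow> g i = g j \<Longrightarrow> i = j"
    using g unfolding bij_betw_def inj_on_def by blast
  have gsurj: "\<And>k. k \<in> H' \<Longrightarrow> \<exists>i\<in>L'. g i = k"
    using g unfolding bij_betw_def by blast
  define h where "h i = (if i \<in> L' then g i else i)" for i
  have hH: "\<And>i. i < n \<Longrightarrow> h i \<in> H'" unfolding h_def H'_def using gH by (auto simp: H'_def)
  have hn: "\<And>i. i < n \<Longrightarrow> h i < n" using hH unfolding H'_def by auto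
  define y where "y = map (\<lambda>i. x ! h i) [0..<n]"
  have ly: "length y = n" unfolding y_def by simp
  have yi: "\<And>i. i < n \<Longrightarrow> y ! i = x ! h i" unfolding y_def by simp
  have yeq: "\<And>i j. i < n \<Longrightarrow> j < n \<Longrightarrow> (y ! i = y ! j) = (h i = h j)"
    using yi hn dx lx by (simp add: nth_eq_iff_index_eq)
  have sy: "set y \<subseteq> S" using sx hn lx unfolding y_def by (auto intro: nth_mem)
  have yneg: "y \<in> Col_neg n S"
    unfolding Col_neg_def
  proof (intro CollectI conjI allI impI ly sy)
    fix i assume i: "i < n"
    show "\<exists>!j. j < n \<and> j \<noteq> i \<and> y ! i = y ! j"
    proof (cases "i \<in> L'")
      case True
      have g1: "g i \<in> H'" using gH True by blast
      then have g2: "g i < n" "g i \<notin> L'" unfolding H'_def by auto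
      have hg: "h (g i) = g i" "h i = g i" using g2 True unfolding h_def by auto
      show ?thesis
      proof (rule ex1I[of _ "g i"])
        show "g i < n \<and> g i \<noteq> i \<and> y ! i = y ! g i"
          using g2 True i yeq hg by metis
      next
        fix j assume j: "j < n \<and> j \<noteq> i \<and> y ! i = y ! j"
        then have "h j = g i" using yeq i hg by metis
        then show "j = g i" using ginj True unfolding h_def by (metis j)
      qed
    next
      case False
      then have iH: "i \<in> H'" using i unfolding H'_def by auto
      obtain k where k: "k \<in> L'" "g k = i" using gsurj iH by blast
      have hk: "h k = i" "h i = i" using k False unfolding h_def by auto
      have kn: "k < n" using k L'n by auto
      show ?thesis
      proof (rule ex1I[of _ k])
        show "k < n \<and> k \<noteq> i \<and> y ! i = y ! k"
          using kn k False yeq i hk by metis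
      next
        fix j assume j: "j < n \<and> j \<noteq> i \<and> y ! i = y ! j"
        then have "h j = i" using yeq i hk by metis
        then show "j = k" using ginj k j unfolding h_def by (metis)
      qed
    qed
  qed
  then have yS: "y \<in> Col_dom n S" unfolding Col_dom_def by simp
  have ynd: "\<not> distinct y" using neg_not_distinct[OF yneg] n2 by simp
  have pynn: "\<And>i. i < n \<Longrightarrow> 0 \<le> p y i" and pys: "(\<Sum>i<n. p y i) = 1"
    using p yS unfolding prob_families_def by auto
  have py1: "\<And>i. i < n \<Longrightarrow> p y i \<le> 1"
  proof -
    fix i assume "i < n"
    then have "p y i \<le> (\<Sum>i<n. p y i)" by (intro member_le_sum) (use pynn in auto)
    then show "p y i \<le> 1" using pys by simp
  qed
  have diff: "i \<in> L'" if "i < n" "x ! i \<noteq> y ! i" for i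
  proof (rule ccontr)
    assume "i \<notin> L'"
    then have "h i = i" unfolding h_def by simp
    then show False using yi[OF that(1)] that(2) by simp
  qed
  have ex: "\<exists>i. i < n \<and> x ! i \<noteq> y ! i"
  proof (rule ccontr)
    assume "\<not> ?thesis"
    then have "x = y" using lx ly by (intro nth_equalityI) auto
    then show False using dx ynd by simp
  qed
  have s0: "sqrt (2 / real n) > 0" using n2 by simp
  have bnd: "sqrt (p x i * p y i) \<le> sqrt (2 / real n)" if i: "i < n" "x ! i \<noteq> y ! i" for i
  proof -
    have "i \<in> L" using diff i L' by blast
    then have "p x i \<le> 2 / real n" unfolding L_def by simp
    then have "p x i * p y i \<le> 2 / real n * 1"
      using py1 pynn pxnn i by (intro mult_mono) auto
    then show ?thesis by simp
  qed
  have "ereal (1 / sqrt (2 / real n)) \<le> pi_term n p x y"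
    by (rule pi_term_ge[OF bnd s0 ex]) (use pxnn pynn in auto)
  moreover have "1 / sqrt (2 / real n) = sqrt (real n) / sqrt 2"
    by (simp add: real_sqrt_divide)
  moreover have "(x, y) \<in> {(x, y). x \<in> Col_dom n S \<and> y \<in> Col_dom n S \<and> Col x \<noteq> Col y}"
    using xS yS dx ynd unfolding Col_def by simp
  ultimately show ?thesis by (metis (no_types, lifting) SUP_upper2 fst_conv snd_conv)
qed

theorem mainTheorem19:
  shows "\<exists>c1 c2 :: real. c1 > 0 \<and> c2 > 0 \<and>
    (\<forall>(n::nat) (\<Sigma>::nat set). even n \<and> n \<ge> 2 \<and> finite \<Sigma> \<and> card \<Sigma> \<ge> n \<longrightarrow>
       ereal (c1 * sqrt (real n)) \<le> maxPI n (Col_dom n \<Sigma>) Col \<and>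
       maxPI n (Col_dom n \<Sigma>) Col \<le> ereal (c2 * sqrt (real n)))"
proof (rule exI[of _ "1 / sqrt 2"], rule exI[of _ "sqrt 2"], intro conjI allI impI)
  fix n :: nat and S :: "nat set"
  assume a: "even n \<and> n \<ge> 2 \<and> finite S \<and> card S \<ge> n"
  have eq: "1 / sqrt 2 * sqrt (real n) = sqrt (real n) / sqrt 2" by simp
  show "ereal (1 / sqrt 2 * sqrt (real n)) \<le> maxPI n (Col_dom n S) Col"
    unfolding maxPI_def eq
    by (rule INF_greatest) (use lower_p a in blast)
  have n0: "n > 0" using a by simp
  have sup: "(SUP xy \<in> {(x, y). x \<in> Col_dom n S \<and> y \<in> Col_dom n S \<and> Col x \<noteq> Col y}.
        pi_term n (p0 n) (fst xy) (snd xy)) \<le> ereal (sqrt 2 * sqrt (real n))"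
  proof (rule SUP_least)
    fix xy assume "xy \<in> {(x, y). x \<in> Col_dom n S \<and> y \<in> Col_dom n S \<and> Col x \<noteq> Col y}"
    then obtain x y where xy: "xy = (x, y)" "x \<in> Col_dom n S" "y \<in> Col_dom n S" "distinct x \<noteq> distinct y"
      unfolding Col_def by auto
    show "pi_term n (p0 n) (fst xy) (snd xy) \<le> ereal (sqrt 2 * sqrt (real n))"
    proof (cases "distinct x")
      case True
      then have "x \<in> Col_pos n S" "y \<in> Col_neg n S" using xy neg_not_distinct[OF _ n0] unfolding Col_dom_def Col_pos_def by auto
      then show ?thesis using upper_pair n0 xy(1) by simp
    next
      case False
      then have "y \<in> Col_pos n S" "x \<in> Col_neg n S" using xy neg_not_distinct[OF _ n0] unfolding Col_dom_def Col_pos_def by auto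
      then show ?thesis using upper_pair[of y n S x] n0 xy(1) pi_term_sym[of n "p0 n" x y] by simp
    qed
  qed
  show "maxPI n (Col_dom n S) Col \<le> ereal (sqrt 2 * sqrt (real n))"
    unfolding maxPI_def
    apply (rule order_trans[OF _ sup]) apply (rule INF_lower) apply (rule p0_prob[OF n0]) done
qed (auto)

end
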